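(* Let $\mathcal{P}\subset\mathbb{R}^d$ be a finite set of item vectors, $\bm{q}\in\mathbb{R}^d$, $k>1$ an integer, $\lambda\in[0,1]$, $\mu>0$, and assume $\langle\bm{x},\bm{y}\rangle\ge0$ for all $\bm{x},\bm{y}\in\mathcal{P}\cup\{\bm{q}\}$. Then the set function $f_{avg}:2^{\mathcal{P}}\to\mathbb{R}$, $$f_{avg}(\mathcal{S}) = \tfrac{\lambda}{k}\sum_{\bm{p}\in\mathcal{S}}\langle\bm{p},\bm{q}\rangle - \tfrac{2\mu(1-\lambda)}{k(k-1)}\sum_{\{\bm{p},\bm{p}'\}\subseteq\mathcal{S},\,\bm{p}\neq\bm{p}'}\langle\bm{p},\bm{p}'\rangle,$$ is submodular, i.e., $f_{avg}(\mathcal{S}\cup\{\bm{p}\})-f_{avg}(\mathcal{S})\ge f_{avg}(\mathcal{T}\cup\{\bm{p}\})-f_{avg}(\mathcal{T})$ for all $\mathcal{S}\subseteq\mathcal{T}\subseteq\mathcal{P}$ and $\bm{p}\in\mathcal{P}\setminus\mathcal{T}$.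
   Context: The second sum in $f_{avg}$ runs over unordered pairs of distinct elements of $\mathcal{S}$; $k$ is a fixed parameter (not the size of $\mathcal{S}$). The nonnegativity of inner products is the paper's standing assumption (item and user vectors come from a non-negative matrix factorization). *)

theory Defs
  imports "HOL-Analysis.Analysis"
begin

text \<open>Sum of inner products over unordered pairs of distinct elements of S:
  each unordered pair {p,p'} with p \<noteq> p' is counted once, i.e. half the
  sum over ordered pairs of distinct elements.\<close>
definition pair_sum :: "('a::real_inner) set \<Rightarrow> real" where
  "pair_sum S = (\<Sum>(p, p') \<in> {(p, p'). p \<in> S \<and> p' \<in> S \<and> p \<noteq> p'}. inner p p') / 2"

definition f_avg :: "real \<Rightarrow> real \<Rightarrow> nat \<Rightarrow> ('a::real_inner) \<Rightarrow> 'a set \<Rightarrow> real" where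
  "f_avg lam mu k q S =
     lam / real k * (\<Sum>p\<in>S. inner p q)
     - 2 * mu * (1 - lam) / (real k * (real k - 1)) * pair_sum S"

end

theory Submission
  imports Defs
begin

lemma pair_sum_insert:
  fixes S :: "('a::real_inner) set"
  assumes fin: "finite S" and pS: "p \<notin> S"
  shows "pair_sum (insert p S) = pair_sum S + (\<Sum>x\<in>S. inner p x)"
proof -
  let ?D = "\<lambda>S. {(a, b). a \<in> S \<and> b \<in> S \<and> a \<noteq> b}"
  have finD: "finite (?D S)"
    by (rule finite_subset[of _ "S \<times> S"]) (auto simp: fin)
  have eq: "?D (insert p S) = ?D S \<union> (Pair p ` S \<union> (\<lambda>b. (b, p)) ` S)"
    using pS by auto
  have d1: "?D S \<inter> (Pair p ` S \<union> (\<lambda>b. (b, p)) ` S) = {}" using pS by auto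
  have d2: "Pair p ` S \<inter> (\<lambda>b. (b, p)) ` S = {}" using pS by auto
  have s1: "(\<Sum>(a,b)\<in>Pair p ` S. inner a b) = (\<Sum>x\<in>S. inner p x)"
    by (subst sum.reindex) (auto simp: inj_on_def)
  have s2: "(\<Sum>(a,b)\<in>(\<lambda>b. (b, p)) ` S. inner a b) = (\<Sum>x\<in>S. inner p x)"
    by (subst sum.reindex) (auto simp: inj_on_def inner_commute)
  have "(\<Sum>(a,b)\<in>?D (insert p S). inner a b) =
        (\<Sum>(a,b)\<in>?D S. inner a b) + ((\<Sum>(a,b)\<in>Pair p ` S. inner a b) + (\<Sum>(a,b)\<in>(\<lambda>b. (b, p)) ` S. inner a b))"
    unfolding eq
    apply (subst sum.union_disjoint[OF finD _ d1])
     apply (simp add: fin)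
    apply (subst sum.union_disjoint[OF _ _ d2])
      apply (auto simp: fin)
    done
  then show ?thesis unfolding pair_sum_def using s1 s2 by simp
qed

theorem lemma1:
  fixes P :: "(real ^ 'd) set" and q :: "real ^ 'd"
    and k :: nat and lam mu :: real
  assumes "finite P"
    and "k > 1"
    and "0 \<le> lam" and "lam \<le> 1"
    and "mu > 0"
    and "\<And>x y. x \<in> P \<union> {q} \<Longrightarrow> y \<in> P \<union> {q} \<Longrightarrow> inner x y \<ge> 0"
  shows "\<forall>S T p. S \<subseteq> T \<and> T \<subseteq> P \<and> p \<in> P - T \<longrightarrow>
           f_avg lam mu k q (S \<union> {p}) - f_avg lam mu k q S
             \<ge> f_avg lam mu k q (T \<union> {p}) - f_avg lam mu k q T"
proof (intro allI impI)
  fix S T p assume h: "S \<subseteq> T \<and> T \<subseteq> P \<and> p \<in> P - T"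
  have fT: "finite T" using h assms(1) finite_subset by blast
  have fS: "finite S" using h fT finite_subset by blast
  define c where "c = 2 * mu * (1 - lam) / (real k * (real k - 1))"
  have c0: "c \<ge> 0" unfolding c_def using assms(2-5) by auto
  have marg: "f_avg lam mu k q (A \<union> {p}) - f_avg lam mu k q A
      = lam / real k * inner p q - c * (\<Sum>x\<in>A. inner p x)"
    if "finite A" "p \<notin> A" for A
    using pair_sum_insert[OF that] that
    unfolding f_avg_def c_def[symmetric] by (simp add: algebra_simps)
  have le: "(\<Sum>x\<in>S. inner p x) \<le> (\<Sum>x\<in>T. inner p x)"
    apply (rule sum_mono2[OF fT])
    using h assms(6) by auto
  have "c * (\<Sum>x\<in>S. inner p x) \<le> c * (\<Sum>x\<in>T. inner p x)"
    using le c0 by (rule mult_left_mono)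
  moreover have pS: "p \<notin> S" "p \<notin> T" using h by blast+
  ultimately show "f_avg lam mu k q (S \<union> {p}) - f_avg lam mu k q S
             \<ge> f_avg lam mu k q (T \<union> {p}) - f_avg lam mu k q T"
    using marg[OF fS pS(1)] marg[OF fT pS(2)] by linarith
qed

end
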